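(* Let $f:2^N\to\mathbb R$ be monotone with $f(\emptyset)\ge0$, $|N|=n$ with $\sqrt n$ integer, and let $p$ be a polynomial and $\epsilon\ge f(N)/p(n)$. Given a sufficiently large polynomial number of samples $(S_j,f(S_j))$ with $S_j$ i.i.d. from $\mathcal D^{sub}$, with probability at least $1-O(e^{-n})$ the estimates $\hat v_i=\frac{1}{|\mathcal S_{i,\sqrt n+1}|}\sum_{S\in\mathcal S_{i,\sqrt n+1}}f(S)-\frac{1}{|\mathcal S_{-i,\sqrt n}|}\sum_{S\in\mathcal S_{-i,\sqrt n}}f(S)$ satisfy, for all $e_i\in N$, $\big|\hat v_i-\mathbb E_{S\sim\mathcal D_{\sqrt n}\mid e_i\notin S}[f_S(e_i)]\big|\le\epsilon$.
   Context: $N=\{e_1,\dots,e_n\}$, $f_S(e)=f(S\cup\{e\})-f(S)$. $\mathcal D_j$ is the uniform distribution over subsets of $N$ of size $j$; $\mathcal D^{sub}$ draws from $\mathcal D_k$, $\mathcal D_{\sqrt n}$, $\mathcal D_{\sqrt n+1}$ with probability $1/3$ each, for some $1\le k\le n$. $\mathcal S_{i,j}$ (resp. $\mathcal S_{-i,j}$) is the collection of samples of size $j$ containing (resp. not containing) $e_i$. *)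

theory Defs
  imports "HOL-Probability.Probability" "HOL-Computational_Algebra.Polynomial"
begin

text \<open>Ground set N = {0..<n}; element e_i is i.\<close>

definition marg :: "(nat set \<Rightarrow> real) \<Rightarrow> nat set \<Rightarrow> nat \<Rightarrow> real" where
  "marg f S e = f (S \<union> {e}) - f S"

definition Dunif :: "nat \<Rightarrow> nat \<Rightarrow> nat set pmf" where
  "Dunif n j = pmf_of_set {S. S \<subseteq> {..<n} \<and> card S = j}"

text \<open>D^sub: D_k, D_s, D_(s+1) with probability 1/3 each (s = sqrt n).\<close>
definition Dsub :: "nat \<Rightarrow> nat \<Rightarrow> nat \<Rightarrow> nat set pmf" where
  "Dsub n k s = bind_pmf (pmf_of_set {0,1,2::nat})
     (\<lambda>r. if r = 0 then Dunif n k else if r = 1 then Dunif n s else Dunif n (s+1))"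

definition Sin :: "(nat \<Rightarrow> nat set) \<Rightarrow> nat \<Rightarrow> nat \<Rightarrow> nat \<Rightarrow> nat set" where
  "Sin smp m i j = {t. t < m \<and> i \<in> smp t \<and> card (smp t) = j}"
definition Sout :: "(nat \<Rightarrow> nat set) \<Rightarrow> nat \<Rightarrow> nat \<Rightarrow> nat \<Rightarrow> nat set" where
  "Sout smp m i j = {t. t < m \<and> i \<notin> smp t \<and> card (smp t) = j}"

text \<open>The estimate v_i from m samples smp 0..m-1 (empirical averages, samples counted with multiplicity).\<close>
definition vhat :: "(nat set \<Rightarrow> real) \<Rightarrow> (nat \<Rightarrow> nat set) \<Rightarrow> nat \<Rightarrow> nat \<Rightarrow> nat \<Rightarrow> real" where
  "vhat f smp m s i =
     (\<Sum>t\<in>Sin smp m i (s+1). f (smp t)) / real (card (Sin smp m i (s+1)))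
   - (\<Sum>t\<in>Sout smp m i s. f (smp t)) / real (card (Sout smp m i s))"

definition cond_marg :: "(nat set \<Rightarrow> real) \<Rightarrow> nat \<Rightarrow> nat \<Rightarrow> nat \<Rightarrow> real" where
  "cond_marg f n s i =
     (let A = {S. S \<subseteq> {..<n} \<and> card S = s \<and> i \<notin> S}
      in (\<Sum>S\<in>A. marg f S i) / real (card A))"

end

theory Submission
  imports Defs
begin


lemma hoeff_Pi:
  fixes D :: "'a pmf" and g :: "'a \<Rightarrow> real"
  assumes m: "m > 0" and ab: "a < b" and rng: "\<forall>x\<in>set_pmf D. g x \<in> {a..b}" and d: "\<delta> \<ge> 0"
  shows "measure_pmf.prob (Pi_pmf {..<m} dd (\<lambda>_. D))
           {x. \<bar>(\<Sum>t<m. g (x t)) - real m * measure_pmf.expectation D g\<bar> \<ge> \<delta>}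
         \<le> 2 * exp (-2 * \<delta>\<^sup>2 / (real m * (b - a)\<^sup>2))"
proof -
  define P where "P = Pi_pmf {..<m} dd (\<lambda>_. D)"
  have comp: "map_pmf (\<lambda>x. x t) P = D" if "t < m" for t
    unfolding P_def using that by (subst Pi_pmf_component) auto
  have E: "measure_pmf.expectation P (\<lambda>x. g (x t)) = measure_pmf.expectation D g" if "t < m" for t
  proof -
    have "measure_pmf.expectation P (\<lambda>x. g (x t)) = measure_pmf.expectation (map_pmf (\<lambda>x. x t) P) g"
      by simp
    then show ?thesis using comp[OF that] by simp
  qed
  interpret H: Hoeffding_ineq "measure_pmf P" "{..<m}" "\<lambda>t x. g (x t)" "\<lambda>_. a" "\<lambda>_. b"
     "(\<Sum>t<m. measure_pmf.expectation P (\<lambda>x. g (x t)))"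
  proof unfold_locales
    show "prob_space.indep_vars (measure_pmf P) (\<lambda>_. borel) (\<lambda>t x. g (x t)) {..<m}"
      unfolding P_def
      by (intro prob_space.indep_vars_compose2[OF _ indep_vars_Pi_pmf])
         (auto simp: measure_pmf.prob_space_axioms)
  next
    fix t assume t: "t \<in> {..<m}"
    have "AE y in measure_pmf (map_pmf (\<lambda>x. x t) P). g y \<in> {a..b}"
      using comp[of t] t rng by (simp add: AE_measure_pmf_iff)
    then show "AE x in measure_pmf P. g (x t) \<in> {a..b}"
      by (simp add: AE_measure_pmf_iff)
  qed auto
  have s: "(\<Sum>t<m. measure_pmf.expectation P (\<lambda>x. g (x t))) = real m * measure_pmf.expectation D g"
    using E by simp
  have pos: "(\<Sum>i\<in>{..<m}. (b - a)\<^sup>2) > 0" using m ab by simp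
  show ?thesis
    using H.Hoeffding_ineq_abs_ge[OF d pos] unfolding s P_def[symmetric] by simp
qed



lemma group_lemma:
  fixes D :: "'a pmf" and c :: "'a \<Rightarrow> bool" and f :: "'a \<Rightarrow> real"
  assumes m: "m > 0" and pi: "\<pi> > 0" and e: "\<epsilon> > 0" and R: "R > 0"
    and supp: "\<forall>S\<in>set_pmf D. c S \<longrightarrow> \<bar>f S - \<mu>\<bar> \<le> R"
    and EZ: "measure_pmf.expectation D (\<lambda>S. if c S then 1 else 0) \<ge> \<pi>"
    and EW: "measure_pmf.expectation D (\<lambda>S. if c S then f S - \<mu> else 0) = 0"
  shows "measure_pmf.prob (Pi_pmf {..<m} dd (\<lambda>_. D))
     {x. \<not> (card {t. t < m \<and> c (x t)} > 0 \<and>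
            \<bar>(\<Sum>t\<in>{t. t < m \<and> c (x t)}. f (x t)) / real (card {t. t < m \<and> c (x t)}) - \<mu>\<bar> \<le> \<epsilon>)}
     \<le> 2 * exp (- (real m * \<pi>\<^sup>2 / 2)) + 2 * exp (- (real m * \<epsilon>\<^sup>2 * \<pi>\<^sup>2 / (8 * R\<^sup>2)))"
proof -
  define P where "P = Pi_pmf {..<m} dd (\<lambda>_. D)"
  define Z where "Z = (\<lambda>S. if c S then 1 else (0::real))"
  define W where "W = (\<lambda>S. if c S then f S - \<mu> else 0)"
  define EZ where "EZ = measure_pmf.expectation D Z"
  define BZ where "BZ = {x. \<bar>(\<Sum>t<m. Z (x t)) - real m * EZ\<bar> \<ge> real m * \<pi> / 2}"
  define BW where "BW = {x. \<bar>(\<Sum>t<m. W (x t)) - real m * measure_pmf.expectation D W\<bar> \<ge> \<epsilon> * real m * \<pi> / 2}"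
  have hZ: "measure_pmf.prob P BZ \<le> 2 * exp (-2 * (real m * \<pi> / 2)\<^sup>2 / (real m * (1 - 0)\<^sup>2))"
    unfolding BZ_def EZ_def P_def
    by (rule hoeff_Pi) (use m pi in \<open>auto simp: Z_def\<close>)
  have hW: "measure_pmf.prob P BW \<le> 2 * exp (-2 * (\<epsilon> * real m * \<pi> / 2)\<^sup>2 / (real m * (R - (-R))\<^sup>2))"
    unfolding BW_def P_def
    by (rule hoeff_Pi) (use m pi e R supp in \<open>auto simp: W_def\<close>)
  have EW0: "measure_pmf.expectation D W = 0" using EW by (simp add: W_def)
  have EZ1: "EZ \<ge> \<pi>" using EZ by (simp add: EZ_def Z_def)
  have sub: "{x. \<not> (card {t. t < m \<and> c (x t)} > 0 \<and>
            \<bar>(\<Sum>t\<in>{t. t < m \<and> c (x t)}. f (x t)) / real (card {t. t < m \<and> c (x t)}) - \<mu>\<bar> \<le> \<epsilon>)}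
        \<subseteq> BZ \<union> BW"
  proof
    fix x assume x: "x \<in> {x. \<not> (card {t. t < m \<and> c (x t)} > 0 \<and>
            \<bar>(\<Sum>t\<in>{t. t < m \<and> c (x t)}. f (x t)) / real (card {t. t < m \<and> c (x t)}) - \<mu>\<bar> \<le> \<epsilon>)}"
    show "x \<in> BZ \<union> BW"
    proof (rule ccontr)
      assume nb: "x \<notin> BZ \<union> BW"
      define G where "G = {t. t < m \<and> c (x t)}"
      have finG: "finite G" unfolding G_def by auto
      have sZ: "(\<Sum>t<m. Z (x t)) = real (card G)"
      proof -
        have "(\<Sum>t<m. Z (x t)) = (\<Sum>t\<in>{t\<in>{..<m}. c (x t)}. 1)"
          unfolding Z_def by (subst sum.inter_filter[symmetric]) auto
        also have "{t\<in>{..<m}. c (x t)} = G" unfolding G_def by auto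
        finally show ?thesis by simp
      qed
      have sW: "(\<Sum>t<m. W (x t)) = (\<Sum>t\<in>G. f (x t)) - real (card G) * \<mu>"
      proof -
        have "(\<Sum>t<m. W (x t)) = (\<Sum>t\<in>{t\<in>{..<m}. c (x t)}. f (x t) - \<mu>)"
          unfolding W_def by (subst sum.inter_filter[symmetric]) auto
        also have "{t\<in>{..<m}. c (x t)} = G" unfolding G_def by auto
        finally show ?thesis by (simp add: sum_subtractf)
      qed
      have "\<bar>real (card G) - real m * EZ\<bar> < real m * \<pi> / 2" using nb sZ unfolding BZ_def by auto
      moreover have "real m * EZ \<ge> real m * \<pi>" using EZ1 by (intro mult_left_mono) auto
      ultimately have cG: "real (card G) > real m * \<pi> / 2" by linarith
      have "real m * \<pi> / 2 > 0" using m pi by simp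
      hence cpos: "card G > 0" using cG by linarith
      have "\<bar>(\<Sum>t\<in>G. f (x t)) - real (card G) * \<mu>\<bar> < \<epsilon> * real m * \<pi> / 2"
        using nb sW EW0 unfolding BW_def by auto
      also have "\<dots> = \<epsilon> * (real m * \<pi> / 2)" by simp
      also have "\<dots> < \<epsilon> * real (card G)" using cG e by (rule mult_strict_left_mono)
      finally have lt: "\<bar>(\<Sum>t\<in>G. f (x t)) - real (card G) * \<mu>\<bar> < \<epsilon> * real (card G)" .
      have "(\<Sum>t\<in>G. f (x t)) / real (card G) - \<mu> = ((\<Sum>t\<in>G. f (x t)) - real (card G) * \<mu>) / real (card G)"
        using cpos by (simp add: field_simps)
      hence "\<bar>(\<Sum>t\<in>G. f (x t)) / real (card G) - \<mu>\<bar> \<le> \<epsilon>"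
        using lt cpos by (simp add: abs_divide divide_le_eq)
      moreover from x have "\<not> (card G > 0 \<and> \<bar>(\<Sum>t\<in>G. f (x t)) / real (card G) - \<mu>\<bar> \<le> \<epsilon>)"
        unfolding G_def by simp
      ultimately show False using cpos by blast
    qed
  qed
  have "measure_pmf.prob P {x. \<not> (card {t. t < m \<and> c (x t)} > 0 \<and>
            \<bar>(\<Sum>t\<in>{t. t < m \<and> c (x t)}. f (x t)) / real (card {t. t < m \<and> c (x t)}) - \<mu>\<bar> \<le> \<epsilon>)}
        \<le> measure_pmf.prob P (BZ \<union> BW)"
    by (rule measure_pmf.finite_measure_mono[OF sub]) simp
  also have "\<dots> \<le> measure_pmf.prob P BZ + measure_pmf.prob P BW"
    by (rule measure_Un_le) auto
  finally have fin: "measure_pmf.prob P {x. \<not> (card {t. t < m \<and> c (x t)} > 0 \<and>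
            \<bar>(\<Sum>t\<in>{t. t < m \<and> c (x t)}. f (x t)) / real (card {t. t < m \<and> c (x t)}) - \<mu>\<bar> \<le> \<epsilon>)}
        \<le> measure_pmf.prob P BZ + measure_pmf.prob P BW" .
  have e1: "-2 * (real m * \<pi> / 2)\<^sup>2 / (real m * (1 - 0)\<^sup>2) = - (real m * \<pi>\<^sup>2 / 2)"
    using m by (simp add: power2_eq_square field_simps)
  have e2: "-2 * (\<epsilon> * real m * \<pi> / 2)\<^sup>2 / (real m * (R - (-R))\<^sup>2) = - (real m * \<epsilon>\<^sup>2 * \<pi>\<^sup>2 / (8 * R\<^sup>2))"
    using m R by (simp add: power2_eq_square field_simps)
  show ?thesis using fin hZ hW unfolding P_def e1 e2 by linarith
qed


definition Uset :: "nat \<Rightarrow> nat \<Rightarrow> nat set set" where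
  "Uset n j = {S. S \<subseteq> {..<n} \<and> card S = j}"

lemma Uset_finite[simp]: "finite (Uset n j)"
  unfolding Uset_def by (rule finite_subset[of _ "Pow {..<n}"]) auto

lemma Uset_card: "card (Uset n j) = n choose j"
  unfolding Uset_def using n_subsets[of "{..<n}" j] by simp

lemma Uset_ne: "j \<le> n \<Longrightarrow> Uset n j \<noteq> {}"
proof -
  assume "j \<le> n"
  hence "{..<j} \<in> Uset n j" unfolding Uset_def by auto
  thus ?thesis by auto
qed

lemma Dunif_alt: "Dunif n j = pmf_of_set (Uset n j)"
  unfolding Dunif_def Uset_def by simp

lemma set_Dunif: "j \<le> n \<Longrightarrow> set_pmf (Dunif n j) = Uset n j"
  unfolding Dunif_alt using Uset_ne by simp

lemma set_Dsub: assumes "k \<le> n" "s + 1 \<le> n"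
  shows "set_pmf (Dsub n k s) \<subseteq> {S. S \<subseteq> {..<n}}"
  using assms unfolding Dsub_def
  by (auto simp: set_Dunif Uset_def split: if_splits)

lemma exp_Dsub:
  fixes h :: "nat set \<Rightarrow> real"
  assumes "k \<le> n" "s + 1 \<le> n"
  shows "measure_pmf.expectation (Dsub n k s) h =
     ((\<Sum>S\<in>Uset n k. h S) / card (Uset n k) + (\<Sum>S\<in>Uset n s. h S) / card (Uset n s)
      + (\<Sum>S\<in>Uset n (s+1). h S) / card (Uset n (s+1))) / 3"
proof -
  have "measure_pmf.expectation (Dsub n k s) h =
    (\<Sum>r\<in>{0,1,2::nat}. measure_pmf.expectation
        (if r = 0 then Dunif n k else if r = 1 then Dunif n s else Dunif n (s+1)) h /\<^sub>R real (card {0,1,2::nat}))"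
    unfolding Dsub_def
    by (rule pmf_expectation_bind_pmf_of_set) (use assms Uset_ne[of k n] Uset_ne[of s n] Uset_ne[of "s+1" n] in \<open>auto simp: Dunif_alt\<close>)
  also have "\<dots> = ((\<Sum>S\<in>Uset n k. h S) / card (Uset n k) + (\<Sum>S\<in>Uset n s. h S) / card (Uset n s)
      + (\<Sum>S\<in>Uset n (s+1). h S) / card (Uset n (s+1))) / 3"
    using assms Uset_ne[of k n] Uset_ne[of s n] Uset_ne[of "s+1" n]
    by (simp add: Dunif_alt integral_pmf_of_set field_simps)
  finally show ?thesis .
qed



lemma sum_filter_U:
  fixes h :: "nat set \<Rightarrow> real"
  assumes hc: "\<And>j. {S\<in>Uset n j. c S} = (if j = j0 then G else {})"
  shows "(\<Sum>S\<in>Uset n j. if c S then h S else 0) = (if j = j0 then (\<Sum>S\<in>G. h S) else 0)"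
proof -
  have "(\<Sum>S\<in>Uset n j. if c S then h S else 0) = (\<Sum>S\<in>{S\<in>Uset n j. c S}. h S)"
    by (rule sum.inter_filter[symmetric]) simp
  also have "\<dots> = (if j = j0 then (\<Sum>S\<in>G. h S) else 0)" by (simp add: hc)
  finally show ?thesis .
qed

lemma group_stats:
  fixes c :: "nat set \<Rightarrow> bool" and f :: "nat set \<Rightarrow> real"
  assumes kn: "k \<le> n" and sn: "s + 1 \<le> n" and j0: "j0 = s \<or> j0 = s+1"
    and hc: "\<And>j. {S\<in>Uset n j. c S} = (if j = j0 then G else {})"
    and Gne: "G \<noteq> {}" and cardU: "real (card (Uset n j0)) \<le> real n * real (card G)"
  shows "measure_pmf.expectation (Dsub n k s) (\<lambda>S. if c S then 1 else 0) \<ge> 1 / (3 * real n)"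
    and "measure_pmf.expectation (Dsub n k s) (\<lambda>S. if c S then f S - (\<Sum>T\<in>G. f T) / real (card G) else 0) = 0"
proof -
  have j0n: "j0 \<le> n" using j0 sn by auto
  have GU: "G \<subseteq> Uset n j0" using hc[of j0] by auto
  have finG: "finite G" using GU Uset_finite[of n j0] by (rule finite_subset)
  have cG: "card G > 0" using finG Gne by (simp add: card_gt_0_iff)
  have cU: "card (Uset n j0) > 0" using Uset_ne[OF j0n] by (simp add: card_gt_0_iff)
  have npos: "n > 0" using sn by simp
  define av where "av j = (if j = j0 then real (card G) / real (card (Uset n j0)) else 0)" for j
  have avZ: "(\<Sum>S\<in>Uset n j. if c S then 1 else (0::real)) / real (card (Uset n j)) = av j" for j
    using sum_filter_U[OF hc, of "\<lambda>_. 1" j] by (simp add: av_def)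
  have av0: "av j \<ge> 0" for j by (simp add: av_def)
  have avj0: "av j0 \<ge> 1 / real n"
    using cardU cG cU npos by (simp add: av_def field_simps)
  have "measure_pmf.expectation (Dsub n k s) (\<lambda>S. if c S then 1 else 0) = (av k + av s + av (s+1)) / 3"
    using exp_Dsub[OF kn sn] avZ by simp
  also have "\<dots> \<ge> av j0 / 3" using j0 av0[of k] av0[of s] av0[of "s+1"] by auto
  moreover have "av j0 / 3 \<ge> 1 / (3 * real n)" using avj0 by simp
  ultimately show "measure_pmf.expectation (Dsub n k s) (\<lambda>S. if c S then 1 else 0) \<ge> 1 / (3 * real n)"
    by linarith
  define \<mu> where "\<mu> = (\<Sum>T\<in>G. f T) / real (card G)"
  have "(\<Sum>S\<in>G. f S - \<mu>) = 0"
    using cG by (simp add: sum_subtractf \<mu>_def)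
  hence z: "(\<Sum>S\<in>Uset n j. if c S then f S - \<mu> else 0) = 0" for j
    using sum_filter_U[OF hc, of "\<lambda>S. f S - \<mu>" j] by simp
  show "measure_pmf.expectation (Dsub n k s) (\<lambda>S. if c S then f S - (\<Sum>T\<in>G. f T) / real (card G) else 0) = 0"
    unfolding \<mu>_def[symmetric] exp_Dsub[OF kn sn] z by simp
qed



definition Aset :: "nat \<Rightarrow> nat \<Rightarrow> nat \<Rightarrow> nat set set" where
  "Aset n s i = {S. S \<subseteq> {..<n} \<and> card S = s \<and> i \<notin> S}"
definition Bset :: "nat \<Rightarrow> nat \<Rightarrow> nat \<Rightarrow> nat set set" where
  "Bset n s i = {T. T \<subseteq> {..<n} \<and> card T = s + 1 \<and> i \<in> T}"

lemma Aset_card: assumes "i < n" shows "card (Aset n s i) = (n - 1) choose s"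
proof -
  have "Aset n s i = {S. S \<subseteq> {..<n} - {i} \<and> card S = s}" unfolding Aset_def by auto
  moreover have "card ({..<n} - {i}) = n - 1" using assms by simp
  ultimately show ?thesis using n_subsets[of "{..<n} - {i}" s] by simp
qed

lemma AB_bij: assumes "i < n" shows "bij_betw (\<lambda>S. S \<union> {i}) (Aset n s i) (Bset n s i)"
proof (rule bij_betwI[where g = "\<lambda>T. T - {i}"])
  show "(\<lambda>S. S \<union> {i}) \<in> Aset n s i \<rightarrow> Bset n s i"
  proof
    fix S assume S: "S \<in> Aset n s i"
    hence "finite S" unfolding Aset_def using finite_subset by blast
    with S assms show "S \<union> {i} \<in> Bset n s i" unfolding Aset_def Bset_def by auto
  qed
  show "(\<lambda>T. T - {i}) \<in> Bset n s i \<rightarrow> Aset n s i"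
  proof
    fix T assume T: "T \<in> Bset n s i"
    hence "finite T" unfolding Bset_def using finite_subset by blast
    with T show "T - {i} \<in> Aset n s i" unfolding Aset_def Bset_def by auto
  qed
  show "S \<union> {i} - {i} = S" if "S \<in> Aset n s i" for S using that unfolding Aset_def by auto
  show "T - {i} \<union> {i} = T" if "T \<in> Bset n s i" for T using that unfolding Bset_def by auto
qed

lemma Bset_card: assumes "i < n" shows "card (Bset n s i) = (n - 1) choose s"
  using bij_betw_same_card[OF AB_bij[OF assms]] Aset_card[OF assms] by simp

lemma AB_sum: assumes "i < n"
  shows "(\<Sum>S\<in>Aset n s i. f (S \<union> {i})) = (\<Sum>T\<in>Bset n s i. (f T :: real))"
  using sum.reindex_bij_betw[OF AB_bij[OF assms], of f] by simp

lemma hcA: "{S\<in>Uset n j. i \<notin> S \<and> card S = s} = (if j = s then Aset n s i else {})"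
  unfolding Uset_def Aset_def by auto

lemma hcB: "{S\<in>Uset n j. i \<in> S \<and> card S = s + 1} = (if j = s + 1 then Bset n s i else {})"
  unfolding Uset_def Bset_def by auto

lemma cardUA: assumes "s < n"
  shows "real (card (Uset n s)) \<le> real n * real (card (Aset n s i))"
proof (cases "i < n")
  case True
  have "(n - s) * (n choose s) = n * ((n - 1) choose s)" by (rule binomial_absorb_comp)
  moreover have "n choose s \<le> (n - s) * (n choose s)" using assms by simp
  ultimately have "n choose s \<le> n * ((n - 1) choose s)" by simp
  then show ?thesis using Aset_card[OF True] Uset_card[of n s]
    by (metis of_nat_le_iff of_nat_mult)
next
  case False
  hence "Aset n s i = Uset n s" unfolding Aset_def Uset_def by auto
  then show ?thesis using assms
    by (metis mult_le_cancel_right1 of_nat_0_le_iff of_nat_1 of_nat_le_iff less_imp_le_nat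
        Suc_leI le_less_trans less_one not_less zero_less_iff_neq_zero)
qed

lemma cardUB: assumes "i < n"
  shows "real (card (Uset n (s+1))) \<le> real n * real (card (Bset n s i))"
proof -
  have "Suc s * (n choose Suc s) = n * ((n - 1) choose s)" by (rule binomial_absorption)
  moreover have "n choose Suc s \<le> Suc s * (n choose Suc s)" by simp
  ultimately have "n choose Suc s \<le> n * ((n - 1) choose s)" by simp
  then show ?thesis using Bset_card[OF assms] Uset_card[of n "s+1"]
    by (metis of_nat_le_iff of_nat_mult Suc_eq_plus1)
qed

lemma AB_ne: assumes "i < n" "s < n"
  shows "Aset n s i \<noteq> {}" "Bset n s i \<noteq> {}"
proof -
  have "(n - 1) choose s > 0" using assms by simp
  then show "Aset n s i \<noteq> {}" "Bset n s i \<noteq> {}"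
    using Aset_card[OF assms(1), of s] Bset_card[OF assms(1), of s] by auto
qed

lemma cond_marg_alt: assumes "i < n"
  shows "cond_marg f n s i = (\<Sum>T\<in>Bset n s i. f T) / real (card (Bset n s i))
                          - (\<Sum>S\<in>Aset n s i. f S) / real (card (Aset n s i))"
proof -
  have c: "card (Bset n s i) = card (Aset n s i)" using Aset_card[OF assms] Bset_card[OF assms] by simp
  have "cond_marg f n s i = (\<Sum>S\<in>Aset n s i. f (S \<union> {i}) - f S) / real (card (Aset n s i))"
    unfolding cond_marg_def Aset_def marg_def Let_def by simp
  also have "\<dots> = (\<Sum>T\<in>Bset n s i. f T) / real (card (Bset n s i))
                          - (\<Sum>S\<in>Aset n s i. f S) / real (card (Aset n s i))"
    unfolding sum_subtractf AB_sum[OF assms] c by (simp add: diff_divide_distrib)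
  finally show ?thesis .
qed



lemma avg_bounds:
  fixes f :: "'a \<Rightarrow> real"
  assumes "finite G" "G \<noteq> {}" "\<forall>x\<in>G. f x \<in> {0..M}"
  shows "(\<Sum>x\<in>G. f x) / real (card G) \<in> {0..M}"
proof -
  have c: "real (card G) > 0" using assms by (simp add: card_gt_0_iff)
  have "(\<Sum>x\<in>G. f x) \<le> (\<Sum>x\<in>G. M)" using assms by (intro sum_mono) auto
  hence "(\<Sum>x\<in>G. f x) \<le> real (card G) * M" by simp
  moreover have "(\<Sum>x\<in>G. f x) \<ge> 0" using assms by (intro sum_nonneg) auto
  ultimately show ?thesis using c by (auto simp: field_simps)
qed

lemma main_case:
  fixes f :: "nat set \<Rightarrow> real" and P \<epsilon> :: real
  assumes n2: "2 \<le> n" and sn: "s + 1 \<le> n" and k1: "1 \<le> k" and kn: "k \<le> n"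
    and mono: "\<forall>A B. A \<subseteq> B \<longrightarrow> B \<subseteq> {..<n} \<longrightarrow> f A \<le> f B"
    and f0: "f {} \<ge> 0" and P: "P > 0" and e: "\<epsilon> > 0" and eP: "\<epsilon> \<ge> f {..<n} / P"
    and m: "real m \<ge> 144 * real n ^ 3 * (2 * P + 1)\<^sup>2"
  shows "measure_pmf.prob (Pi_pmf {..<m} {} (\<lambda>_. Dsub n k s))
        {smp. \<forall>i<n. \<bar>vhat f smp m s i - cond_marg f n s i\<bar> \<le> \<epsilon>}
        \<ge> 1 - 8 * exp (- real n)"
proof -
  define M where "M = f {..<n}"
  define D where "D = Dsub n k s"
  define PP where "PP = Pi_pmf {..<m} {} (\<lambda>_. D)"
  define e' where "e' = \<epsilon> / 2"
  define R where "R = M + e'"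
  define \<pi> where "\<pi> = 1 / (3 * real n)"
  have npos: "real n > 0" using n2 by simp
  have fr: "f S \<in> {0..M}" if "S \<subseteq> {..<n}" for S
    using mono that f0 unfolding M_def by (metis atLeastAtMost_iff empty_subsetI order_refl order_trans)
  have M0: "M \<ge> 0" using fr[of "{..<n}"] by simp
  have e'pos: "e' > 0" using e by (simp add: e'_def)
  have Rpos: "R > 0" using M0 e'pos by (simp add: R_def)
  have pipos: "\<pi> > 0" using npos by (simp add: \<pi>_def)
  have suppD: "set_pmf D \<subseteq> {S. S \<subseteq> {..<n}}" unfolding D_def by (rule set_Dsub[OF kn sn])
  have mpos: "real m > 0"
  proof -
    have "144 * real n ^ 3 * (2 * P + 1)\<^sup>2 > 0" using npos P by simp
    thus ?thesis using m by linarith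
  qed
  hence m0: "m > 0" by simp
  have ex1: "exp (- (real m * \<pi>\<^sup>2 / 2)) \<le> exp (- 2 * real n)"
  proof -
    have "(2 * P + 1)\<^sup>2 \<ge> 1" using P by (intro one_le_power) simp
    hence "144 * real n ^ 3 * (2 * P + 1)\<^sup>2 \<ge> 144 * real n ^ 3 * 1"
      using npos by (intro mult_left_mono) auto
    hence "real m \<ge> 144 * real n ^ 3" using m by linarith
    hence "real m * \<pi>\<^sup>2 / 2 \<ge> 144 * real n ^ 3 * \<pi>\<^sup>2 / 2"
      by (intro divide_right_mono mult_right_mono) auto
    also have "144 * real n ^ 3 * \<pi>\<^sup>2 / 2 = 8 * real n"
      using npos by (simp add: \<pi>_def power2_eq_square power3_eq_cube field_simps)
    finally show ?thesis using npos by simp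
  qed
  have ex2: "exp (- (real m * e'\<^sup>2 * \<pi>\<^sup>2 / (8 * R\<^sup>2))) \<le> exp (- 2 * real n)"
  proof -
    define r where "r = e' / R"
    have "e' * (2 * P) \<ge> M"
      using eP P by (simp add: e'_def M_def field_simps)
    hence "r * (2 * P + 1) \<ge> 1" using Rpos by (simp add: r_def R_def field_simps)
    hence r1: "r\<^sup>2 * (2 * P + 1)\<^sup>2 \<ge> 1"
      by (metis one_le_power power_mult_distrib)
    have "real m * r\<^sup>2 \<ge> 144 * real n ^ 3 * (2 * P + 1)\<^sup>2 * r\<^sup>2"
      using m by (intro mult_right_mono) auto
    also have "144 * real n ^ 3 * (2 * P + 1)\<^sup>2 * r\<^sup>2 \<ge> 144 * real n ^ 3 * 1"
      using r1 npos by (simp add: mult.assoc mult.commute[of "r\<^sup>2"])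
    finally have mr: "real m * r\<^sup>2 \<ge> 144 * real n ^ 3" by simp
    have "real m * e'\<^sup>2 * \<pi>\<^sup>2 / (8 * R\<^sup>2) = (real m * r\<^sup>2) / (72 * real n ^ 2)"
      using Rpos npos by (simp add: r_def \<pi>_def power2_eq_square field_simps)
    also have "\<dots> \<ge> 144 * real n ^ 3 / (72 * real n ^ 2)"
      using mr npos by (intro divide_right_mono) auto
    also have "144 * real n ^ 3 / (72 * real n ^ 2) = 2 * real n"
      using npos by (simp add: power2_eq_square power3_eq_cube field_simps)
    finally show ?thesis by simp
  qed
  define F1 where "F1 i = {x. \<not> (card {t. t < m \<and> i \<in> x t \<and> card (x t) = s + 1} > 0 \<and>
       \<bar>(\<Sum>t\<in>{t. t < m \<and> i \<in> x t \<and> card (x t) = s + 1}. f (x t)) /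
          real (card {t. t < m \<and> i \<in> x t \<and> card (x t) = s + 1})
        - (\<Sum>T\<in>Bset n s i. f T) / real (card (Bset n s i))\<bar> \<le> e')}" for i
  define F2 where "F2 i = {x. \<not> (card {t. t < m \<and> i \<notin> x t \<and> card (x t) = s} > 0 \<and>
       \<bar>(\<Sum>t\<in>{t. t < m \<and> i \<notin> x t \<and> card (x t) = s}. f (x t)) /
          real (card {t. t < m \<and> i \<notin> x t \<and> card (x t) = s})
        - (\<Sum>T\<in>Aset n s i. f T) / real (card (Aset n s i))\<bar> \<le> e')}" for i
  have pF1: "measure_pmf.prob PP (F1 i) \<le> 4 * exp (- 2 * real n)" if i: "i < n" for i
  proof -
    have Bne: "Bset n s i \<noteq> {}" using AB_ne[OF i] sn by simp
    have finB: "finite (Bset n s i)"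
      by (rule finite_subset[OF _ Uset_finite[of n "s+1"]]) (auto simp: Bset_def Uset_def)
    have mu: "(\<Sum>T\<in>Bset n s i. f T) / real (card (Bset n s i)) \<in> {0..M}"
      by (rule avg_bounds[OF finB Bne]) (use fr in \<open>auto simp: Bset_def simp del: atLeastAtMost_iff\<close>)
    have st: "measure_pmf.expectation D (\<lambda>S. if i \<in> S \<and> card S = s + 1 then 1 else 0) \<ge> 1 / (3 * real n)"
         "measure_pmf.expectation D (\<lambda>S. if i \<in> S \<and> card S = s + 1 then
             f S - (\<Sum>T\<in>Bset n s i. f T) / real (card (Bset n s i)) else 0) = 0"
      unfolding D_def
      by (rule group_stats[OF kn sn _ hcB Bne cardUB[OF i]]; simp)+
    have "measure_pmf.prob PP (F1 i) \<le> 2 * exp (- (real m * \<pi>\<^sup>2 / 2)) + 2 * exp (- (real m * e'\<^sup>2 * \<pi>\<^sup>2 / (8 * R\<^sup>2)))"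
      unfolding F1_def PP_def
    proof (rule group_lemma[OF m0 pipos e'pos Rpos])
      show "\<forall>S\<in>set_pmf D. i \<in> S \<and> card S = s + 1 \<longrightarrow>
              \<bar>f S - (\<Sum>T\<in>Bset n s i. f T) / real (card (Bset n s i))\<bar> \<le> R"
      proof (intro ballI impI)
        fix S assume "S \<in> set_pmf D"
        hence "f S \<in> {0..M}" using suppD fr by blast
        thus "\<bar>f S - (\<Sum>T\<in>Bset n s i. f T) / real (card (Bset n s i))\<bar> \<le> R"
          using mu e'pos unfolding R_def by (simp add: abs_le_iff)
      qed
    qed (use st in \<open>simp_all add: \<pi>_def\<close>)
    then show ?thesis using ex1 ex2 by linarith
  qed
  have pF2: "measure_pmf.prob PP (F2 i) \<le> 4 * exp (- 2 * real n)" if i: "i < n" for i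
  proof -
    have sn': "s < n" using sn by simp
    have Ane: "Aset n s i \<noteq> {}" using AB_ne[OF i sn'] by simp
    have finA: "finite (Aset n s i)"
      by (rule finite_subset[OF _ Uset_finite[of n s]]) (auto simp: Aset_def Uset_def)
    have mu: "(\<Sum>T\<in>Aset n s i. f T) / real (card (Aset n s i)) \<in> {0..M}"
      by (rule avg_bounds[OF finA Ane]) (use fr in \<open>auto simp: Aset_def simp del: atLeastAtMost_iff\<close>)
    have st: "measure_pmf.expectation D (\<lambda>S. if i \<notin> S \<and> card S = s then 1 else 0) \<ge> 1 / (3 * real n)"
         "measure_pmf.expectation D (\<lambda>S. if i \<notin> S \<and> card S = s then
             f S - (\<Sum>T\<in>Aset n s i. f T) / real (card (Aset n s i)) else 0) = 0"
      unfolding D_def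
      by (rule group_stats[OF kn sn _ hcA Ane cardUA[OF sn']]; simp)+
    have "measure_pmf.prob PP (F2 i) \<le> 2 * exp (- (real m * \<pi>\<^sup>2 / 2)) + 2 * exp (- (real m * e'\<^sup>2 * \<pi>\<^sup>2 / (8 * R\<^sup>2)))"
      unfolding F2_def PP_def
    proof (rule group_lemma[OF m0 pipos e'pos Rpos])
      show "\<forall>S\<in>set_pmf D. i \<notin> S \<and> card S = s \<longrightarrow>
              \<bar>f S - (\<Sum>T\<in>Aset n s i. f T) / real (card (Aset n s i))\<bar> \<le> R"
      proof (intro ballI impI)
        fix S assume "S \<in> set_pmf D"
        hence "f S \<in> {0..M}" using suppD fr by blast
        thus "\<bar>f S - (\<Sum>T\<in>Aset n s i. f T) / real (card (Aset n s i))\<bar> \<le> R"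
          using mu e'pos unfolding R_def by (simp add: abs_le_iff)
      qed
    qed (use st in \<open>simp_all add: \<pi>_def\<close>)
    then show ?thesis using ex1 ex2 by linarith
  qed
  define E where "E = {smp. \<forall>i<n. \<bar>vhat f smp m s i - cond_marg f n s i\<bar> \<le> \<epsilon>}"
  have sub: "UNIV - E \<subseteq> (\<Union>i<n. F1 i \<union> F2 i)"
  proof
    fix x assume "x \<in> UNIV - E"
    then obtain i where i: "i < n" and bad: "\<bar>vhat f x m s i - cond_marg f n s i\<bar> > \<epsilon>"
      unfolding E_def by force
    show "x \<in> (\<Union>i<n. F1 i \<union> F2 i)"
    proof (rule ccontr)
      assume "x \<notin> (\<Union>i<n. F1 i \<union> F2 i)"
      hence g1: "x \<notin> F1 i" and g2: "x \<notin> F2 i" using i by auto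
      have "\<bar>vhat f x m s i - cond_marg f n s i\<bar> \<le> e' + e'"
        using g1 g2 unfolding F1_def F2_def vhat_def cond_marg_alt[OF i] Sin_def Sout_def
        by (simp add: abs_le_iff)
      with bad show False by (simp add: e'_def)
    qed
  qed
  have "measure_pmf.prob PP (UNIV - E) \<le> measure_pmf.prob PP (\<Union>i<n. F1 i \<union> F2 i)"
    by (rule measure_pmf.finite_measure_mono[OF sub]) simp
  also have "\<dots> \<le> (\<Sum>i<n. measure_pmf.prob PP (F1 i \<union> F2 i))"
    by (rule measure_UNION_le) auto
  also have "\<dots> \<le> (\<Sum>i<n. 8 * exp (- 2 * real n))"
  proof (rule sum_mono)
    fix i assume "i \<in> {..<n}"
    hence i: "i < n" by simp
    have "measure_pmf.prob PP (F1 i \<union> F2 i) \<le> measure_pmf.prob PP (F1 i) + measure_pmf.prob PP (F2 i)"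
      by (rule measure_Un_le) auto
    thus "measure_pmf.prob PP (F1 i \<union> F2 i) \<le> 8 * exp (- 2 * real n)" using pF1[OF i] pF2[OF i] by linarith
  qed
  also have "\<dots> = 8 * (real n * exp (- real n)) * exp (- real n)"
    by (simp add: exp_add[symmetric])
  also have "\<dots> \<le> 8 * 1 * exp (- real n)"
  proof -
    have "real n \<le> exp (real n)" using exp_ge_add_one_self[of "real n"] by linarith
    hence "real n * exp (- real n) \<le> 1" by (simp add: exp_minus field_simps)
    thus ?thesis by (intro mult_right_mono mult_left_mono) auto
  qed
  finally have "measure_pmf.prob PP (UNIV - E) \<le> 8 * exp (- real n)" by simp
  moreover have "measure_pmf.prob PP (UNIV - E) = 1 - measure_pmf.prob PP E"
    using measure_pmf.prob_compl[of E PP] by simp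
  ultimately show ?thesis unfolding E_def PP_def D_def by linarith
qed



lemma eps0_case:
  fixes f :: "nat set \<Rightarrow> real"
  assumes sn: "s + 1 \<le> n" and kn: "k \<le> n"
    and mono: "\<forall>A B. A \<subseteq> B \<longrightarrow> B \<subseteq> {..<n} \<longrightarrow> f A \<le> f B"
    and f0: "f {} \<ge> 0" and fN: "f {..<n} \<le> 0" and e: "\<epsilon> \<ge> 0"
  shows "measure_pmf.prob (Pi_pmf {..<m} {} (\<lambda>_. Dsub n k s))
        {smp. \<forall>i<n. \<bar>vhat f smp m s i - cond_marg f n s i\<bar> \<le> \<epsilon>} = 1"
proof -
  have fz: "f S = 0" if "S \<subseteq> {..<n}" for S
    using mono that f0 fN by (metis empty_subsetI order_refl order_trans order_antisym)
  have supp: "set_pmf (Pi_pmf {..<m} {} (\<lambda>_. Dsub n k s)) \<subseteq> {x. \<forall>t<m. x t \<subseteq> {..<n}}"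
    using set_Pi_pmf_subset'[of "{..<m}" "{}" "\<lambda>_. Dsub n k s"] set_Dsub[OF kn sn]
    by (auto simp: PiE_dflt_def)
  have good: "\<forall>i<n. \<bar>vhat f x m s i - cond_marg f n s i\<bar> \<le> \<epsilon>" if x: "\<forall>t<m. x t \<subseteq> {..<n}" for x
  proof (intro allI impI)
    fix i assume i: "i < n"
    have "vhat f x m s i = 0"
      unfolding vhat_def Sin_def Sout_def using x by (simp add: fz)
    moreover have "cond_marg f n s i = 0"
      unfolding cond_marg_def marg_def Let_def using i by (simp add: fz)
    ultimately show "\<bar>vhat f x m s i - cond_marg f n s i\<bar> \<le> \<epsilon>" using e by simp
  qed
  show ?thesis
    by (subst measure_pmf.prob_eq_1) (use supp good in \<open>auto simp: AE_measure_pmf_iff\<close>)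
qed

theorem lemma19:
  fixes p :: "real poly"
  assumes p_pos: "\<forall>n::nat. n \<ge> 1 \<longrightarrow> poly p (real n) > 0"
  shows "\<exists>(q :: real poly) (C :: real).
    \<forall>(s::nat) (n::nat) (k::nat) (f :: nat set \<Rightarrow> real) (\<epsilon>::real) (m::nat).
      n = s^2 \<longrightarrow> 1 \<le> k \<longrightarrow> k \<le> n \<longrightarrow>
      (\<forall>A B. A \<subseteq> B \<longrightarrow> B \<subseteq> {..<n} \<longrightarrow> f A \<le> f B) \<longrightarrow>
      f {} \<ge> 0 \<longrightarrow>
      \<epsilon> \<ge> f {..<n} / poly p (real n) \<longrightarrow>
      real m \<ge> poly q (real n) \<longrightarrow>
      measure_pmf.prob (Pi_pmf {..<m} {} (\<lambda>_. Dsub n k s))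
        {smp. \<forall>i<n. \<bar>vhat f smp m s i - cond_marg f n s i\<bar> \<le> \<epsilon>}
        \<ge> 1 - C * exp (- real n)"
proof (intro exI allI impI)
  fix s n k :: nat and f :: "nat set \<Rightarrow> real" and \<epsilon> :: real and m :: nat
  assume ns: "n = s^2" and k1: "1 \<le> k" and kn: "k \<le> n"
    and mono: "\<forall>A B. A \<subseteq> B \<longrightarrow> B \<subseteq> {..<n} \<longrightarrow> f A \<le> f B"
    and f0: "f {} \<ge> 0" and eP: "\<epsilon> \<ge> f {..<n} / poly p (real n)"
    and m: "real m \<ge> poly (smult 144 ([:0,0,0,1:] * (smult 2 p + 1)^2)) (real n)"
  let ?Pr = "measure_pmf.prob (Pi_pmf {..<m} {} (\<lambda>_. Dsub n k s))
        {smp. \<forall>i<n. \<bar>vhat f smp m s i - cond_marg f n s i\<bar> \<le> \<epsilon>}"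
  show "?Pr \<ge> 1 - 8 * exp (- real n)"
  proof (cases "n \<le> 1")
    case True
    have "exp (- real n) \<ge> exp (- 1)" using True by simp
    moreover have "exp (- 1 :: real) \<ge> 1 / 3" using exp_le by (simp add: exp_minus field_simps)
    ultimately have "8 * exp (- real n) \<ge> 1" by linarith
    moreover have "?Pr \<ge> 0" by simp
    ultimately show ?thesis by linarith
  next
    case False
    hence n2: "2 \<le> n" by simp
    have s2: "s \<ge> 2"
    proof (rule ccontr)
      assume "\<not> s \<ge> 2"
      hence "s \<le> 1" by simp
      hence "s = 0 \<or> s = 1" by auto
      hence "s^2 \<le> 1" by auto
      thus False using n2 ns by simp
    qed
    have sn: "s + 1 \<le> n"
    proof -
      have "s * 2 \<le> s * s" using s2 by (intro mult_left_mono) auto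
      hence "s + 1 \<le> s * s" using s2 by linarith
      thus ?thesis using ns by (simp add: power2_eq_square)
    qed
    define P where "P = poly p (real n)"
    have P: "P > 0" using p_pos n2 unfolding P_def by simp
    have fN: "f {..<n} \<ge> 0" using mono f0 by (metis empty_subsetI order_refl order_trans)
    have e0: "\<epsilon> \<ge> 0" using eP fN P unfolding P_def[symmetric] using divide_nonneg_pos[OF fN P] by linarith
    show ?thesis
    proof (cases "\<epsilon> = 0")
      case True
      have "f {..<n} / P \<le> 0" using eP True unfolding P_def by simp
      hence "f {..<n} \<le> 0" using P by (simp add: divide_le_0_iff)
      hence "?Pr = 1" by (rule eps0_case[OF sn kn mono f0 _ e0])
      thus ?thesis by simp
    next
      case False
      hence e: "\<epsilon> > 0" using e0 by simp
      have "poly (smult 144 ([:0,0,0,1:] * (smult 2 p + 1)^2)) (real n) = 144 * real n ^ 3 * (2 * P + 1)\<^sup>2"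
        unfolding P_def by (simp add: power3_eq_cube)
      hence m': "real m \<ge> 144 * real n ^ 3 * (2 * P + 1)\<^sup>2" using m by simp
      have "?Pr \<ge> 1 - 8 * exp (- real n)"
        by (rule main_case[OF n2 sn k1 kn mono f0 P e _ m']) (use eP in \<open>simp add: P_def\<close>)
      thus ?thesis .
    qed
  qed
qed


end
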